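(* Let $R=[0,1]^2$, $s\in\mathbb{N}$, $u=2^{-s}$, and let $(B_1,B_2)$ be a good box pair. Let $\ell=\{a\lambda+b\}$ and $\ell'=\{a'\lambda+b'\}$ be two lines in $\mathcal{L}$ traversing $(B_1,B_2)$, with $a,a'$ unit direction vectors and $b,b'$ the intersection points of $\ell,\ell'$ with the line $y=-x$. Then $\|b-b'\|_\infty\le4\sqrt u$. In particular, $B=O(\sqrt u)$, where $B$ is the supremum of $\|b_c-b\|_\infty$ over all lines in $\mathcal{L}$ traversing $(B_1,B_2)$, $b$ their intersection with $y=-x$, and $b_c$ the intersection of the line through $c_1,c_2$ with $y=-x$.
   Context: For $p,q\in\mathbb{R}^2$ write $p\le q$ if both coordinates satisfy $\le$. $R$ is split into $2^s\times2^s$ congruent closed squares ("boxes") of side length $u$. A box pair is an ordered pair $(B_1,B_2)$ of boxes with centers $c_1,c_2$. Let $\mathcal{L}$ be the set of non-vertical lines in $\mathbb{R}^2$ with positive slope; each has a unit direction vector $a=(a_1,a_2)$ with positive coordinates, and $\hat{\ell}:=\min\{a_1,a_2\}$. A line $\ell\in\mathcal{L}$ traverses $(B_1,B_2)$ if it meets both boxes. A box pair is null if $c_1\not\le c_2$; close if $c_1\le c_2$ and $\|c_1-c_2\|_2<\sqrt u$; non-diagonal if $c_1\le c_2$, $\|c_1-c_2\|_2\ge\sqrt u$, and every traversing $\ell\in\mathcal{L}$ satisfies $\hat{\ell}<u^{1/5}$; good if it is neither null, close, nor non-diagonal. $O(\sqrt u)$ means bounded by an absolute constant times $\sqrt u$,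 uniformly over $s$ and good box pairs. *)

theory Defs
  imports "HOL-Analysis.Analysis"
begin

text \<open>Points of the plane are pairs of reals. R = [0,1]^2 is divided into
  2^s x 2^s closed boxes of side u = 2^-s; box (i,j) with i,j < 2^s.\<close>

type_synonym pt = "real \<times> real"

definition pt_le :: "pt \<Rightarrow> pt \<Rightarrow> bool" where
  "pt_le p q \<longleftrightarrow> fst p \<le> fst q \<and> snd p \<le> snd q"

definition sup_dist :: "pt \<Rightarrow> pt \<Rightarrow> real" where
  "sup_dist p q = max \<bar>fst p - fst q\<bar> \<bar>snd p - snd q\<bar>"

definition euc_dist :: "pt \<Rightarrow> pt \<Rightarrow> real" where
  "euc_dist p q = sqrt ((fst p - fst q)^2 + (snd p - snd q)^2)"

definition side :: "nat \<Rightarrow> real" where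
  "side s = 1 / 2 ^ s"

definition is_box_index :: "nat \<Rightarrow> nat \<times> nat \<Rightarrow> bool" where
  "is_box_index s ij \<longleftrightarrow> fst ij < 2 ^ s \<and> snd ij < 2 ^ s"

definition box_of :: "nat \<Rightarrow> nat \<times> nat \<Rightarrow> pt set" where
  "box_of s ij = {p. real (fst ij) * side s \<le> fst p \<and> fst p \<le> real (fst ij + 1) * side s \<and>
                     real (snd ij) * side s \<le> snd p \<and> snd p \<le> real (snd ij + 1) * side s}"

definition center :: "nat \<Rightarrow> nat \<times> nat \<Rightarrow> pt" where
  "center s ij = ((real (fst ij) + 1/2) * side s, (real (snd ij) + 1/2) * side s)"

definition line_through :: "pt \<Rightarrow> pt \<Rightarrow> pt set" where
  "line_through a b = {(fst b + t * fst a, snd b + t * snd a) | t. True}"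

definition unit_pos_dir :: "pt \<Rightarrow> bool" where
  "unit_pos_dir a \<longleftrightarrow> fst a > 0 \<and> snd a > 0 \<and> (fst a)^2 + (snd a)^2 = 1"

text \<open>The class L of non-vertical lines with positive slope.\<close>
definition lines_L :: "pt set set" where
  "lines_L = {l. \<exists>a b. unit_pos_dir a \<and> l = line_through a b}"

definition dir_of :: "pt set \<Rightarrow> pt" where
  "dir_of l = (SOME a. unit_pos_dir a \<and> (\<exists>b. l = line_through a b))"

definition hat :: "pt set \<Rightarrow> real" where
  "hat l = min (fst (dir_of l)) (snd (dir_of l))"

definition traverses :: "nat \<Rightarrow> pt set \<Rightarrow> nat \<times> nat \<Rightarrow> nat \<times> nat \<Rightarrow> bool" where
  "traverses s l B1 B2 \<longleftrightarrow> l \<inter> box_of s B1 \<noteq> {} \<and> l \<inter> box_of s B2 \<noteq> {}"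

definition null_pair :: "nat \<Rightarrow> nat \<times> nat \<Rightarrow> nat \<times> nat \<Rightarrow> bool" where
  "null_pair s B1 B2 \<longleftrightarrow> \<not> pt_le (center s B1) (center s B2)"

definition close_pair :: "nat \<Rightarrow> nat \<times> nat \<Rightarrow> nat \<times> nat \<Rightarrow> bool" where
  "close_pair s B1 B2 \<longleftrightarrow> pt_le (center s B1) (center s B2) \<and>
      euc_dist (center s B1) (center s B2) < sqrt (side s)"

definition nondiagonal_pair :: "nat \<Rightarrow> nat \<times> nat \<Rightarrow> nat \<times> nat \<Rightarrow> bool" where
  "nondiagonal_pair s B1 B2 \<longleftrightarrow> pt_le (center s B1) (center s B2) \<and>
      euc_dist (center s B1) (center s B2) \<ge> sqrt (side s) \<and>
      (\<forall>l\<in>lines_L. traverses s l B1 B2 \<longrightarrow> hat l < side s powr (1/5))"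

definition good_pair :: "nat \<Rightarrow> nat \<times> nat \<Rightarrow> nat \<times> nat \<Rightarrow> bool" where
  "good_pair s B1 B2 \<longleftrightarrow> is_box_index s B1 \<and> is_box_index s B2 \<and>
      \<not> null_pair s B1 B2 \<and> \<not> close_pair s B1 B2 \<and> \<not> nondiagonal_pair s B1 B2"

definition on_antidiag :: "pt \<Rightarrow> bool" where
  "on_antidiag p \<longleftrightarrow> snd p = - fst p"

definition antidiag_point :: "pt set \<Rightarrow> pt" where
  "antidiag_point l = (THE p. p \<in> l \<and> on_antidiag p)"

definition center_point :: "nat \<Rightarrow> nat \<times> nat \<Rightarrow> nat \<times> nat \<Rightarrow> pt" where
  "center_point s B1 B2 = antidiag_point
     (line_through (fst (center s B2) - fst (center s B1), snd (center s B2) - snd (center s B1))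
                   (center s B1))"

definition Bsup :: "nat \<Rightarrow> nat \<times> nat \<Rightarrow> nat \<times> nat \<Rightarrow> real" where
  "Bsup s B1 B2 = (SUP l\<in>{l\<in>lines_L. traverses s l B1 B2}.
                     sup_dist (center_point s B1 B2) (antidiag_point l))"

end

theory Submission
  imports Defs
begin

lemma dl:
  fixes t e1 e2 u :: real
  assumes "0 \<le> t" "t \<le> 1" "\<bar>e1\<bar> \<le> u/2" "\<bar>e2\<bar> \<le> u/2"
  shows "\<bar>t*e2 - (1-t)*e1\<bar> \<le> u/2"
proof -
  have "\<bar>t*e2\<bar> \<le> t*(u/2)" using assms by (simp add: abs_mult mult_left_mono del: times_divide_eq_right)
  moreover have "\<bar>(1-t)*e1\<bar> \<le> (1-t)*(u/2)" using assms by (simp add: abs_mult mult_left_mono del: times_divide_eq_right)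
  moreover have "t*(u/2) + (1-t)*(u/2) = u/2" by (simp add: field_simps)
  moreover have "\<bar>t*e2 - (1-t)*e1\<bar> \<le> \<bar>t*e2\<bar> + \<bar>(1-t)*e1\<bar>" by (rule abs_triangle_ineq4)
  ultimately show ?thesis by linarith
qed

lemma core:
  fixes t t' pa pb qa qb ra rb wa wb xa ya xb yb u \<beta> \<beta>' D :: real
  assumes t: "0 \<le> t" "t \<le> 1" and t': "0 \<le> t'" "t' \<le> 1"
    and b: "\<bar>pa-xa\<bar> \<le> u/2" "\<bar>pb-ya\<bar> \<le> u/2" "\<bar>ra-xa\<bar> \<le> u/2" "\<bar>rb-ya\<bar> \<le> u/2"
      "\<bar>qa-xb\<bar> \<le> u/2" "\<bar>qb-yb\<bar> \<le> u/2" "\<bar>wa-xb\<bar> \<le> u/2" "\<bar>wb-yb\<bar> \<le> u/2"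
    and l: "\<beta> = t*pb - (1-t)*pa" "\<beta> = t*qb - (1-t)*qa"
      "\<beta>' = t'*rb - (1-t')*ra" "\<beta>' = t'*wb - (1-t')*wa"
    and s: "xa+ya \<ge> 0" "xb+yb \<le> 2" and D: "D = xb+yb-xa-ya" "D > 0" and u: "u \<ge> 0"
  shows "D * \<bar>\<beta>-\<beta>'\<bar> \<le> 4*u"
proof -
  define d1 where "d1 = t*(pb-ya) - (1-t)*(pa-xa)"
  define d2 where "d2 = t*(qb-yb) - (1-t)*(qa-xb)"
  define d1' where "d1' = t'*(rb-ya) - (1-t')*(ra-xa)"
  define d2' where "d2' = t'*(wb-yb) - (1-t')*(wa-xb)"
  have h1: "\<bar>d1\<bar> \<le> u/2" unfolding d1_def by (rule dl) (use t b in auto)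
  have h2: "\<bar>d2\<bar> \<le> u/2" unfolding d2_def by (rule dl) (use t b in auto)
  have h3: "\<bar>d1'\<bar> \<le> u/2" unfolding d1'_def by (rule dl) (use t' b in auto)
  have h4: "\<bar>d2'\<bar> \<le> u/2" unfolding d2'_def by (rule dl) (use t' b in auto)
  have e1: "\<beta> = t*(xa+ya) - xa + d1" using l(1) unfolding d1_def by (simp add: algebra_simps)
  have e2: "\<beta> = t*(xb+yb) - xb + d2" using l(2) unfolding d2_def by (simp add: algebra_simps)
  have e3: "\<beta>' = t'*(xa+ya) - xa + d1'" using l(3) unfolding d1'_def by (simp add: algebra_simps)
  have e4: "\<beta>' = t'*(xb+yb) - xb + d2'" using l(4) unfolding d2'_def by (simp add: algebra_simps)
  have "(t-t')*D = t*(xb+yb) - t*(xa+ya) - t'*(xb+yb) + t'*(xa+ya)" unfolding D(1) by (simp add: algebra_simps)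
  also have "\<dots> = d1 - d2 - d1' + d2'" using e1 e2 e3 e4 by linarith
  finally have tD: "\<bar>(t-t')*D\<bar> \<le> 2*u" using h1 h2 h3 h4 by linarith
  have bb: "\<beta>-\<beta>' = (t-t')*(xa+ya) + (d1-d1')" using e1 e3 by (simp add: algebra_simps)
  have "D*\<bar>\<beta>-\<beta>'\<bar> = \<bar>D*(\<beta>-\<beta>')\<bar>" using D by (simp add: abs_mult)
  also have "D*(\<beta>-\<beta>') = ((t-t')*D)*(xa+ya) + D*(d1-d1')" unfolding bb by (simp add: algebra_simps)
  also have "\<bar>((t-t')*D)*(xa+ya) + D*(d1-d1')\<bar> \<le> \<bar>((t-t')*D)*(xa+ya)\<bar> + \<bar>D*(d1-d1')\<bar>"
    by (rule abs_triangle_ineq)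
  also have "\<dots> = \<bar>(t-t')*D\<bar>*(xa+ya) + D*\<bar>d1-d1'\<bar>" using D s by (simp add: abs_mult)
  also have "\<dots> \<le> (2*u)*(xa+ya) + D*u"
    apply (rule add_mono)
     apply (rule mult_right_mono) using tD s apply auto[2]
    apply (rule mult_left_mono) using h1 h3 D by auto
  also have "\<dots> \<le> (2*u)*(2-D) + D*u"
    using s D u by (intro add_mono mult_left_mono) auto
  also have "\<dots> \<le> 4*u" using D u by (simp add: algebra_simps)
  finally show ?thesis .
qed

definition beta :: "pt \<Rightarrow> pt \<Rightarrow> real" where
  "beta a b = (fst a * snd b - snd a * fst b) / (fst a + snd a)"

lemma line_beta:
  assumes "fst a + snd a > 0" "x \<in> line_through a b"
  shows "beta a b = (fst a / (fst a + snd a)) * snd x - (1 - fst a / (fst a + snd a)) * fst x"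
proof -
  obtain t where x: "x = (fst b + t * fst a, snd b + t * snd a)"
    using assms(2) unfolding line_through_def by auto
  have e: "fst a * snd x - snd a * fst x = fst a * snd b - snd a * fst b" unfolding x by (simp add: algebra_simps)
  have "1 - fst a / (fst a + snd a) = snd a / (fst a + snd a)" using assms(1) by (simp add: field_simps)
  hence "(fst a / (fst a + snd a)) * snd x - (1 - fst a / (fst a + snd a)) * fst x
     = (fst a / (fst a + snd a)) * snd x - (snd a / (fst a + snd a)) * fst x" by simp
  also have "\<dots> = (fst a * snd x - snd a * fst x) / (fst a + snd a)" by (simp add: diff_divide_distrib)
  finally have "(fst a / (fst a + snd a)) * snd x - (1 - fst a / (fst a + snd a)) * fst x
     = (fst a * snd x - snd a * fst x) / (fst a + snd a)" .
  thus ?thesis unfolding beta_def e by simp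
qed

lemma antidiag:
  assumes "fst a + snd a > 0"
  shows "antidiag_point (line_through a b) = (- beta a b, beta a b)"
  unfolding antidiag_point_def
proof (rule the_equality)
  let ?t = "- (fst b + snd b) / (fst a + snd a)"
  have "(- beta a b, beta a b) = (fst b + ?t * fst a, snd b + ?t * snd a)"
    using assms unfolding beta_def by (simp add: field_simps)
  hence "(- beta a b, beta a b) \<in> line_through a b"
    unfolding line_through_def by blast
  thus "(- beta a b, beta a b) \<in> line_through a b \<and> on_antidiag (- beta a b, beta a b)"
    unfolding on_antidiag_def by auto
next
  fix p assume h: "p \<in> line_through a b \<and> on_antidiag p"
  then obtain t where p: "p = (fst b + t * fst a, snd b + t * snd a)"
    unfolding line_through_def by auto
  have "snd b + t * snd a = - (fst b + t * fst a)" using h p unfolding on_antidiag_def by simp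
  hence "t * (fst a + snd a) = - (fst b + snd b)" by (simp add: algebra_simps)
  hence tt: "t = - (fst b + snd b) / (fst a + snd a)" using assms by (simp add: field_simps)
  show "p = (- beta a b, beta a b)"
    unfolding p tt beta_def using assms by (simp add: field_simps)
qed

lemma half_near: "(lo::real) \<le> x \<Longrightarrow> x \<le> u + lo \<Longrightarrow> \<bar>x - (lo + u/2)\<bar> \<le> u/2"
  by (rule abs_leI) linarith+

lemma box_near:
  assumes "x \<in> box_of s ij"
  shows "\<bar>fst x - fst (center s ij)\<bar> \<le> side s / 2 \<and> \<bar>snd x - snd (center s ij)\<bar> \<le> side s / 2"
proof -
  have h: "real (fst ij) * side s \<le> fst x" "fst x \<le> side s + real (fst ij) * side s"
    "real (snd ij) * side s \<le> snd x" "snd x \<le> side s + real (snd ij) * side s"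
    using assms unfolding box_of_def by (auto simp: algebra_simps)
  have c: "fst (center s ij) = real (fst ij) * side s + side s / 2"
    "snd (center s ij) = real (snd ij) * side s + side s / 2"
    unfolding center_def by (auto simp: algebra_simps)
  show ?thesis unfolding c using half_near[OF h(1) h(2)] half_near[OF h(3) h(4)] by simp
qed

lemma side_pos: "side s > 0" unfolding side_def by simp

lemma coord_bound:
  assumes "i < (2::nat)^s"
  shows "(real i + 1/2) * side s \<le> 1"
proof -
  have "i + 1 \<le> (2::nat)^s" using assms by simp
  hence "real (i + 1) \<le> real ((2::nat)^s)" by (simp only: of_nat_le_iff)
  hence "real i + 1/2 \<le> 2^s" by simp
  moreover have "(0::real) < 2^s" by simp
  ultimately show ?thesis unfolding side_def by (simp add: pos_divide_le_eq)
qed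

lemma center_bound:
  assumes "is_box_index s ij"
  shows "fst (center s ij) + snd (center s ij) \<le> 2" "fst (center s ij) + snd (center s ij) \<ge> 0"
proof -
  have "(real (fst ij) + 1/2) * side s \<le> 1" "(real (snd ij) + 1/2) * side s \<le> 1"
    using assms unfolding is_box_index_def by (auto intro: coord_bound)
  thus "fst (center s ij) + snd (center s ij) \<le> 2" unfolding center_def by simp
  show "fst (center s ij) + snd (center s ij) \<ge> 0" unfolding center_def using side_pos[of s] by simp
qed

lemma center_in_box: "center s ij \<in> box_of s ij"
  unfolding center_def box_of_def using side_pos[of s] by (auto simp: algebra_simps)

lemma key:
  assumes le: "pt_le (center s B1) (center s B2)"
    and far: "euc_dist (center s B1) (center s B2) \<ge> sqrt (side s)"
    and i1: "is_box_index s B1" and i2: "is_box_index s B2"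
    and a: "fst a \<ge> 0" "snd a \<ge> 0" "fst a + snd a > 0"
    and a': "fst a' \<ge> 0" "snd a' \<ge> 0" "fst a' + snd a' > 0"
    and tr: "traverses s (line_through a b) B1 B2" and tr': "traverses s (line_through a' b') B1 B2"
  shows "\<bar>beta a b - beta a' b'\<bar> \<le> 4 * sqrt (side s)"
proof -
  obtain p where p: "p \<in> line_through a b" "p \<in> box_of s B1" using tr unfolding traverses_def by auto
  obtain q where q: "q \<in> line_through a b" "q \<in> box_of s B2" using tr unfolding traverses_def by auto
  obtain r where r: "r \<in> line_through a' b'" "r \<in> box_of s B1" using tr' unfolding traverses_def by auto
  obtain w where w: "w \<in> line_through a' b'" "w \<in> box_of s B2" using tr' unfolding traverses_def by auto
  define u where "u = side s"
  have u: "u > 0" unfolding u_def by (rule side_pos)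
  define x1 where "x1 = fst (center s B1)"
  define y1 where "y1 = snd (center s B1)"
  define x2 where "x2 = fst (center s B2)"
  define y2 where "y2 = snd (center s B2)"
  define D where "D = x2+y2-x1-y1"
  have dx: "x2 - x1 \<ge> 0" "y2 - y1 \<ge> 0" using le unfolding pt_le_def x1_def x2_def y1_def y2_def by auto
  have "sqrt u \<le> sqrt ((x2-x1)^2 + (y2-y1)^2)"
    using far unfolding euc_dist_def u_def x1_def x2_def y1_def y2_def by (simp add: power2_commute)
  also have "\<dots> \<le> sqrt ((x2-x1+(y2-y1))^2)"
  proof (intro real_sqrt_le_mono)
    have "0 \<le> (x2-x1)*(y2-y1)" using dx by simp
    moreover have "(x2-x1+(y2-y1))^2 = (x2-x1)^2 + (y2-y1)^2 + 2*((x2-x1)*(y2-y1))"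
      by (simp add: power2_sum)
    ultimately show "(x2-x1)^2 + (y2-y1)^2 \<le> (x2-x1+(y2-y1))^2" by linarith
  qed
  also have "\<dots> = D" using dx unfolding D_def by simp
  finally have Dge: "sqrt u \<le> D" .
  have Dpos: "D > 0" using Dge u real_sqrt_gt_zero[of u] by linarith
  define t where "t = fst a / (fst a + snd a)"
  define t' where "t' = fst a' / (fst a' + snd a')"
  have t: "0 \<le> t" "t \<le> 1" using a unfolding t_def by (auto simp: field_simps)
  have t': "0 \<le> t'" "t' \<le> 1" using a' unfolding t'_def by (auto simp: field_simps)
  have main: "D * \<bar>beta a b - beta a' b'\<bar> \<le> 4*u"
    apply (rule core[where t=t and t'=t' and pa="fst p" and pb="snd p" and qa="fst q" and qb="snd q"
       and ra="fst r" and rb="snd r" and wa="fst w" and wb="snd w" and xa=x1 and ya=y1 and xb=x2 and yb=y2])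
    using t t' box_near[OF p(2)] box_near[OF q(2)] box_near[OF r(2)] box_near[OF w(2)]
      line_beta[OF a(3) p(1)] line_beta[OF a(3) q(1)] line_beta[OF a'(3) r(1)] line_beta[OF a'(3) w(1)]
      center_bound[OF i1] center_bound[OF i2] Dpos u
    unfolding x1_def y1_def x2_def y2_def D_def u_def t_def t'_def by auto
  have "\<bar>beta a b - beta a' b'\<bar> * sqrt u \<le> \<bar>beta a b - beta a' b'\<bar> * D"
    using Dge by (simp add: mult_left_mono)
  also have "\<dots> \<le> 4 * u" using main by (simp add: mult.commute)
  also have "\<dots> = (4 * sqrt u) * sqrt u" using u by simp
  finally have "\<bar>beta a b - beta a' b'\<bar> * sqrt u \<le> (4 * sqrt u) * sqrt u" .
  thus ?thesis using u unfolding u_def by (simp add: mult_le_cancel_right)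
qed


lemma unit_dir: "unit_pos_dir a \<Longrightarrow> fst a \<ge> 0 \<and> snd a \<ge> 0 \<and> fst a + snd a > 0"
  unfolding unit_pos_dir_def by auto

theorem lemma7:
  shows "(\<forall>s B1 B2 a b a' b'. good_pair s B1 B2 \<longrightarrow>
            unit_pos_dir a \<longrightarrow> unit_pos_dir a' \<longrightarrow>
            traverses s (line_through a b) B1 B2 \<longrightarrow> traverses s (line_through a' b') B1 B2 \<longrightarrow>
            on_antidiag b \<longrightarrow> on_antidiag b' \<longrightarrow>
            sup_dist b b' \<le> 4 * sqrt (side s))
       \<and> (\<exists>C. \<forall>s B1 B2. good_pair s B1 B2 \<longrightarrow> Bsup s B1 B2 \<le> C * sqrt (side s))"
proof (intro conjI allI impI exI)
  fix s B1 B2 a b a' b'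
  assume g: "good_pair s B1 B2" and ua: "unit_pos_dir a" and ua': "unit_pos_dir a'"
    and tr: "traverses s (line_through a b) B1 B2" and tr': "traverses s (line_through a' b') B1 B2"
    and ob: "on_antidiag b" and ob': "on_antidiag b'"
  have le: "pt_le (center s B1) (center s B2)" and far: "euc_dist (center s B1) (center s B2) \<ge> sqrt (side s)"
    and i1: "is_box_index s B1" and i2: "is_box_index s B2"
    using g unfolding good_pair_def null_pair_def close_pair_def by auto
  have k: "\<bar>beta a b - beta a' b'\<bar> \<le> 4 * sqrt (side s)"
    using le far i1 i2 tr tr' unit_dir[OF ua] unit_dir[OF ua'] by (intro key[where s=s and a=a and b=b and a'=a' and b'=b']) auto
  have "beta a b = snd b" using ob unit_dir[OF ua] unfolding beta_def on_antidiag_def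
    by (simp add: field_simps)
  moreover have "beta a' b' = snd b'" using ob' unit_dir[OF ua'] unfolding beta_def on_antidiag_def
    by (simp add: field_simps)
  moreover have "sup_dist b b' = \<bar>snd b - snd b'\<bar>" using ob ob' unfolding sup_dist_def on_antidiag_def
    by (simp add: abs_minus_commute)
  ultimately show "sup_dist b b' \<le> 4 * sqrt (side s)" using k by simp
next
  fix s B1 B2
  assume g: "good_pair s B1 B2"
  have le: "pt_le (center s B1) (center s B2)" and far: "euc_dist (center s B1) (center s B2) \<ge> sqrt (side s)"
    and i1: "is_box_index s B1" and i2: "is_box_index s B2"
    using g unfolding good_pair_def null_pair_def close_pair_def by auto
  have ne: "{l\<in>lines_L. traverses s l B1 B2} \<noteq> {}"
    using g le far unfolding good_pair_def nondiagonal_pair_def by auto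
  define d where "d = (fst (center s B2) - fst (center s B1), snd (center s B2) - snd (center s B1))"
  have d: "fst d \<ge> 0" "snd d \<ge> 0" using le unfolding d_def pt_le_def by auto
  have "fst d + snd d > 0"
  proof (rule ccontr)
    assume "\<not> fst d + snd d > 0"
    hence "fst d = 0" "snd d = 0" using d by auto
    hence "euc_dist (center s B1) (center s B2) = 0" unfolding euc_dist_def d_def by simp
    thus False using far side_pos[of s] by simp
  qed
  note d = d this
  have cp: "center_point s B1 B2 = (- beta d (center s B1), beta d (center s B1))"
    unfolding center_point_def d_def[symmetric] using antidiag[OF d(3)] by simp
  have trc: "traverses s (line_through d (center s B1)) B1 B2"
  proof -
    have "center s B1 \<in> line_through d (center s B1)" unfolding line_through_def
      by (rule CollectI, rule exI[of _ 0]) simp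
    moreover have "center s B2 \<in> line_through d (center s B1)" unfolding line_through_def
      by (rule CollectI, rule exI[of _ 1]) (simp add: d_def)
    ultimately show ?thesis unfolding traverses_def using center_in_box by blast
  qed
  show "Bsup s B1 B2 \<le> 4 * sqrt (side s)"
    unfolding Bsup_def
  proof (rule cSUP_least[OF ne])
    fix l assume l: "l \<in> {l\<in>lines_L. traverses s l B1 B2}"
    then obtain a b where ua: "unit_pos_dir a" and lab: "l = line_through a b" unfolding lines_L_def by auto
    have tr: "traverses s (line_through a b) B1 B2" using l lab by simp
    have "\<bar>beta d (center s B1) - beta a b\<bar> \<le> 4 * sqrt (side s)"
      using le far i1 i2 d trc tr unit_dir[OF ua] by (intro key[where s=s and a=d and b="center s B1" and a'=a and b'=b]) auto
    moreover have "antidiag_point l = (- beta a b, beta a b)" using lab antidiag unit_dir[OF ua] by simp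
    ultimately show "sup_dist (center_point s B1 B2) (antidiag_point l) \<le> 4 * sqrt (side s)"
      unfolding cp sup_dist_def by (simp add: abs_minus_commute)
  qed
qed

end
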